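(* Let $m=2^{e_1}p_2^{e_2}\cdots p_r^{e_r}$ with $e_1\ge0$, $p_j$ distinct odd primes and $e_j\ge1$, and let $m_0$ be the squarefree part of $m/2^{e_1}$. Then for every real $s>1/2$, $\mathbb E(\mathbb X_s(m))=h_m(s)$. Furthermore, \[\mathbb E(\mathbb X_\infty(m))=\frac{(-1)^{\omega(m_0)}}{m_0}\prod_{2\le j\le r,\ e_j\text{ even}}\Bigl(1-\frac2{p_j}\Bigr)\frac{a(m)}4.\]
   Context: $\omega(m_0)$ is the number of prime factors of $m_0$; $a(m)=4$ if $m$ is odd and $a(m)=2(-1)^{e_1}$ otherwise. For real $s>1/2$, $(\mathbb X_s(p))_p$ are independent random variables indexed by primes with, for odd $p$, $\mathbb P(\mathbb X_s(p)=1)=a_p(s):=\frac{p-3}{2p}+\frac{2}{p(p^s+1)}$, $\mathbb P(\mathbb X_s(p)=-1)=b_p(s):=\frac{p-1}{2p}$, $\mathbb P(\mathbb X_s(p)=0)=c_p(s):=1-a_p(s)-b_p(s)=1-\frac1p\bigl(p-2+\frac2{p^s+1}\bigr)$; and $\mathbb P(\mathbb X_s(2)=1)=\frac1{8^s+2^s+2}$, $\mathbb P(\mathbb X_s(2)=-1)=\frac12\frac{8^s-4^s+2}{8^s+2^s+2}$, $\mathbb P(\mathbb X_s(2)=0)=\frac{2^{s-1}(4^s+2^s+2)}{8^s+2^s+2}$. $(\mathbb X_\infty(p))_p$ are independent with, for odd $p$, $\mathbb P(\mathbb X_\infty(p)=1)=\frac{p-3}{2p}$, $\mathbb P(\mathbb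 X_\infty(p)=-1)=\frac{p-1}{2p}$, $\mathbb P(\mathbb X_\infty(p)=0)=\frac2p$, and $\mathbb P(\mathbb X_\infty(2)=1)=0$, $\mathbb P(\mathbb X_\infty(2)=\pm\text{}-1)=\mathbb P(\mathbb X_\infty(2)=0)=\frac12$ (i.e. $\mathbb P(\mathbb X_\infty(2)=-1)=\frac12$). Both families are extended totally multiplicatively: value $1$ at $n=1$ and $\prod_{p^e\|n}(\cdot)(p)^e$. Finally \[h_m(s)=\frac{(-1)^{\omega(m_0)}}{m_0}\,\frac{\prod_{2\le j\le r,\ e_j\text{ even}}\bigl(1-\frac2{p_j}\bigr)\bigl(1+\frac{2(p_j-1)}{(p_j-2)(p_j^s-1)}\bigr)}{\prod_{p\mid m}\bigl(1+\frac2{p^s-1}\bigr)}\,\tilde\kappa(m,s),\] where $\tilde\kappa(m,s)=1$ if $m$ is odd and $\tilde\kappa(m,s)=\frac{(-1)^{e_1}}2\frac{8^s+4^s}{8^s+2^s+2}\bigl(1+\frac{2(1+(-1)^{e_1})}{4^s(2^s-1)}\bigr)$ if $m$ is even. *)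

theory Defs
  imports "HOL-Probability.Probability" "HOL-Computational_Algebra.Primes"
begin

definition pXs_one :: "real \<Rightarrow> nat \<Rightarrow> real" where
  "pXs_one s p = (if p = 2 then 1 / (8 powr s + 2 powr s + 2)
     else (real p - 3) / (2 * real p) + 2 / (real p * (real p powr s + 1)))"

definition pXs_mone :: "real \<Rightarrow> nat \<Rightarrow> real" where
  "pXs_mone s p = (if p = 2 then (1/2) * (8 powr s - 4 powr s + 2) / (8 powr s + 2 powr s + 2)
     else (real p - 1) / (2 * real p))"

definition pXs_zero :: "real \<Rightarrow> nat \<Rightarrow> real" where
  "pXs_zero s p = (if p = 2 then 2 powr (s - 1) * (4 powr s + 2 powr s + 2) / (8 powr s + 2 powr s + 2)
     else 1 - (1 / real p) * (real p - 2 + 2 / (real p powr s + 1)))"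

definition pXi_one :: "nat \<Rightarrow> real" where
  "pXi_one p = (if p = 2 then 0 else (real p - 3) / (2 * real p))"

definition pXi_mone :: "nat \<Rightarrow> real" where
  "pXi_mone p = (if p = 2 then 1/2 else (real p - 1) / (2 * real p))"

definition pXi_zero :: "nat \<Rightarrow> real" where
  "pXi_zero p = (if p = 2 then 1/2 else 2 / real p)"

definition Xs_model :: "'a measure \<Rightarrow> real \<Rightarrow> (nat \<Rightarrow> 'a \<Rightarrow> real) \<Rightarrow> bool" where
  "Xs_model M s X \<longleftrightarrow> prob_space M \<and>
     prob_space.indep_vars M (\<lambda>_. borel) X {p. prime p} \<and>
     (\<forall>p. prime p \<longrightarrow>
        measure M {\<omega> \<in> space M. X p \<omega> = 1} = pXs_one s p \<and>
        measure M {\<omega> \<in> space M. X p \<omega> = -1} = pXs_mone s p \<and>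
        measure M {\<omega> \<in> space M. X p \<omega> = 0} = pXs_zero s p)"

definition Xinf_model :: "'a measure \<Rightarrow> (nat \<Rightarrow> 'a \<Rightarrow> real) \<Rightarrow> bool" where
  "Xinf_model M X \<longleftrightarrow> prob_space M \<and>
     prob_space.indep_vars M (\<lambda>_. borel) X {p. prime p} \<and>
     (\<forall>p. prime p \<longrightarrow>
        measure M {\<omega> \<in> space M. X p \<omega> = 1} = pXi_one p \<and>
        measure M {\<omega> \<in> space M. X p \<omega> = -1} = pXi_mone p \<and>
        measure M {\<omega> \<in> space M. X p \<omega> = 0} = pXi_zero p)"

definition Xmult :: "(nat \<Rightarrow> 'a \<Rightarrow> real) \<Rightarrow> nat \<Rightarrow> 'a \<Rightarrow> real" where
  "Xmult X n \<omega> = (\<Prod>p\<in>prime_factors n. X p \<omega> ^ multiplicity p n)"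

definition sqfree_part :: "nat \<Rightarrow> nat" where
  "sqfree_part n = (\<Prod>p\<in>{p \<in> prime_factors n. odd (multiplicity p n)}. p)"

definition m0 :: "nat \<Rightarrow> nat" where
  "m0 m = sqfree_part (m div 2 ^ multiplicity 2 m)"

definition omega :: "nat \<Rightarrow> nat" where
  "omega n = card (prime_factors n)"

definition even_odd_primes :: "nat \<Rightarrow> nat set" where
  "even_odd_primes m = {p \<in> prime_factors m. p \<noteq> 2 \<and> even (multiplicity p m)}"

definition a_fun :: "nat \<Rightarrow> real" where
  "a_fun m = (if odd m then 4 else 2 * (-1) ^ multiplicity 2 m)"

definition kappa_t :: "nat \<Rightarrow> real \<Rightarrow> real" where
  "kappa_t m s = (if odd m then 1 else
     ((-1) ^ multiplicity 2 m / 2) * ((8 powr s + 4 powr s) / (8 powr s + 2 powr s + 2)) *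
     (1 + 2 * (1 + (-1) ^ multiplicity 2 m) / (4 powr s * (2 powr s - 1))))"

definition h_fun :: "nat \<Rightarrow> real \<Rightarrow> real" where
  "h_fun m s = ((-1) ^ omega (m0 m) / real (m0 m)) *
     ((\<Prod>p\<in>even_odd_primes m. (1 - 2 / real p) *
          (1 + 2 * (real p - 1) / ((real p - 2) * (real p powr s - 1))))
      / (\<Prod>p\<in>prime_factors m. 1 + 2 / (real p powr s - 1))) *
     kappa_t m s"

end

theory Submission
  imports Defs
begin

lemma (in prob_space) single_var:
  fixes Z :: "'a \<Rightarrow> real"
  assumes Zm[measurable]: "Z \<in> borel_measurable M"
    and tot: "prob {\<omega>\<in>space M. Z \<omega> = 1} + prob {\<omega>\<in>space M. Z \<omega> = -1} + prob {\<omega>\<in>space M. Z \<omega> = 0} = 1"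
    and e: "e > 0"
  shows "integrable M (\<lambda>\<omega>. Z \<omega> ^ e) \<and>
    integral\<^sup>L M (\<lambda>\<omega>. Z \<omega> ^ e) = prob {\<omega>\<in>space M. Z \<omega> = 1} + (-1)^e * prob {\<omega>\<in>space M. Z \<omega> = -1}"
proof -
  define A1 where "A1 = {\<omega>\<in>space M. Z \<omega> = 1}"
  define A2 where "A2 = {\<omega>\<in>space M. Z \<omega> = -1}"
  define A3 where "A3 = {\<omega>\<in>space M. Z \<omega> = 0}"
  have s1[measurable]: "A1 \<in> events" unfolding A1_def by measurable
  have s2[measurable]: "A2 \<in> events" unfolding A2_def by measurable
  have s3[measurable]: "A3 \<in> events" unfolding A3_def by measurable
  have "prob (A1 \<union> A2 \<union> A3) = prob A1 + prob A2 + prob A3"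
  proof -
    have "prob (A1 \<union> A2 \<union> A3) = prob (A1 \<union> A2) + prob A3"
      by (rule finite_measure_Union) (auto simp: A1_def A2_def A3_def)
    moreover have "prob (A1 \<union> A2) = prob A1 + prob A2"
      by (rule finite_measure_Union) (auto simp: A1_def A2_def)
    ultimately show ?thesis by simp
  qed
  also have "\<dots> = 1" using tot by (simp add: A1_def A2_def A3_def)
  finally have "AE \<omega> in M. \<omega> \<in> A1 \<union> A2 \<union> A3"
    by (subst AE_in_set_eq_1) auto
  then have AE1: "AE \<omega> in M. Z \<omega> ^ e = indicator A1 \<omega> + (-1)^e * indicator A2 \<omega>"
    by eventually_elim (use e in \<open>auto simp: A1_def A2_def A3_def indicator_def\<close>)
  have i1: "integrable M (\<lambda>\<omega>. indicator A1 \<omega> + (-1)^e * (indicator A2 \<omega> :: real))"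
    by (intro Bochner_Integration.integrable_add integrable_mult_right integrable_real_indicator) (auto simp: emeasure_eq_measure)
  have int: "integrable M (\<lambda>\<omega>. Z \<omega> ^ e)"
    by (rule integrable_cong_AE_imp[OF i1 _ AE1[THEN AE_mp, OF AE_I2]]) auto
  have "integral\<^sup>L M (\<lambda>\<omega>. Z \<omega> ^ e) = integral\<^sup>L M (\<lambda>\<omega>. indicator A1 \<omega> + (-1)^e * (indicator A2 \<omega> :: real))"
    by (rule integral_cong_AE) (use AE1 in auto)
  also have "\<dots> = prob A1 + (-1)^e * prob A2"
    by (subst Bochner_Integration.integral_add)
       (auto intro!: integrable_real_indicator simp: emeasure_eq_measure Int_absorb2 sets.sets_into_space)
  finally show ?thesis using int by (simp add: A1_def A2_def)
qed

lemma pf_prod_primes: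
  fixes A :: "nat set"
  assumes "finite A" "\<forall>p\<in>A. prime p"
  shows "prime_factors (\<Prod>A) = A"
  using assms
proof (induction A rule: finite_induct)
  case empty then show ?case by simp
next
  case (insert x F)
  have "\<Prod>F \<noteq> 0" using insert by (auto simp: prime_gt_0_nat)
  moreover have "x \<noteq> 0" using insert by (auto simp: prime_gt_0_nat)
  ultimately show ?case using insert by (simp add: prime_factors_product prime_prime_factors prime_gt_0_nat)
qed

lemma m0_eq:
  assumes "m > 0"
  shows "m0 m = \<Prod>{p\<in>prime_factors m. p \<noteq> 2 \<and> odd (multiplicity p m)}"
proof -
  define k where "k = multiplicity 2 m"
  define n where "n = m div 2 ^ k"
  have mn: "m = 2 ^ k * n" unfolding n_def k_def using multiplicity_dvd[of 2 m] by simp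
  have n0: "n \<noteq> 0" using mn assms by auto
  have mult_p: "multiplicity p n = multiplicity p m" if "prime p" "p \<noteq> 2" for p :: nat
  proof -
    have "multiplicity p m = multiplicity p (2^k) + multiplicity p n"
      unfolding mn by (rule prime_elem_multiplicity_mult_distrib) (use that n0 in auto)
    also have "multiplicity p (2^k) = 0"
      by (rule multiplicity_distinct_prime_power) (use that in auto)
    finally show ?thesis by simp
  qed
  have mult_2: "multiplicity 2 n = 0"
  proof -
    have "multiplicity 2 m = multiplicity (2::nat) (2^k) + multiplicity 2 n"
      unfolding mn by (rule prime_elem_multiplicity_mult_distrib) (use n0 in auto)
    also have "multiplicity (2::nat) (2^k) = k"
      by (simp add: multiplicity_prime_power)
    finally show ?thesis unfolding k_def by simp
  qed
  have "{p \<in> prime_factors n. odd (multiplicity p n)} = {p\<in>prime_factors m. p \<noteq> 2 \<and> odd (multiplicity p m)}"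
  proof (intro set_eqI iffI)
    fix p assume "p \<in> {p \<in> prime_factors n. odd (multiplicity p n)}"
    then have p: "prime p" "multiplicity p n > 0" "odd (multiplicity p n)"
      by (auto simp: prime_factors_multiplicity)
    then have "p \<noteq> 2" using mult_2 by auto
    then show "p \<in> {p\<in>prime_factors m. p \<noteq> 2 \<and> odd (multiplicity p m)}"
      using p mult_p by (auto simp: prime_factors_multiplicity)
  next
    fix p assume "p \<in> {p\<in>prime_factors m. p \<noteq> 2 \<and> odd (multiplicity p m)}"
    then have p: "prime p" "multiplicity p m > 0" "odd (multiplicity p m)" "p \<noteq> 2"
      by (auto simp: prime_factors_multiplicity)
    then show "p \<in> {p \<in> prime_factors n. odd (multiplicity p n)}"
      using mult_p by (auto simp: prime_factors_multiplicity)
  qed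
  then show ?thesis unfolding m0_def sqfree_part_def n_def[symmetric] k_def[symmetric] by simp
qed

lemma sign_part:
  assumes "m > 0"
  shows "(\<Prod>p\<in>{p\<in>prime_factors m. p \<noteq> 2 \<and> odd (multiplicity p m)}. - 1 / real p)
     = (-1) ^ omega (m0 m) / real (m0 m)"
proof -
  define Oset where "Oset = {p\<in>prime_factors m. p \<noteq> 2 \<and> odd (multiplicity p m)}"
  have fin: "finite Oset" and pr: "\<forall>p\<in>Oset. prime p" unfolding Oset_def by auto
  have "omega (m0 m) = card Oset"
    unfolding omega_def m0_eq[OF assms] Oset_def[symmetric] using pf_prod_primes[OF fin pr] by simp
  moreover have "real (m0 m) = (\<Prod>p\<in>Oset. real p)"
    unfolding m0_eq[OF assms] Oset_def[symmetric] by simp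
  moreover have "(\<Prod>p\<in>Oset. - 1 / real p) = (\<Prod>p\<in>Oset. (-1::real)) / (\<Prod>p\<in>Oset. real p)"
    by (rule prod_dividef)
  ultimately show ?thesis unfolding Oset_def[symmetric]
    by simp
qed


lemma alg_o:
  fixes q x :: real assumes "q \<ge> 3" "x > 1"
  shows "(q - 3) / (2 * q) + 2 / (q * (x + 1)) - (q - 1) / (2 * q) = - 1 / q / (1 + 2 / (x - 1))"
  using assms by (simp add: field_split_simps) (smt (z3) mult_pos_pos)

lemma canc4: fixes a b c D :: real assumes "b > 0" "c > 0" "D > 0"
  shows "(- 1 / 2) * (a * c / D) / (c / b) = - (a * b) / (2 * D)"
  using assms by (simp add: field_simps)

lemma canc5: fixes X D :: real assumes "D > 0"
  shows "1 / D - (1/2) * X / D = (2 - X) / (2 * D)"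
  using assms by (simp add: field_simps)

lemma canc6: fixes X Z y D :: real assumes "D > 0"
  shows "1 / D + (1/2) * X / D + (y/2) * Z / D = (2 + X + y * Z) / (2 * D)"
  using assms by (simp add: field_simps)

lemma alg_2o:
  fixes y :: real assumes "y > 1"
  shows "1 / (y^3 + y + 2) - (1/2) * (y^3 - y^2 + 2) / (y^3 + y + 2) =
    (- 1 / 2) * ((y^3 + y^2) / (y^3 + y + 2)) / (1 + 2 / (y - 1))"
proof -
  have y: "y - 1 > 0" "y + 1 > 0" "y^2 > 0" "y^3 + y + 2 > 0" using assms
    by auto (smt (verit) one_less_power zero_less_power)
  have e3: "1 + 2 / (y - 1) = (y + 1) / (y - 1)" using y by (simp add: field_simps)
  have f: "y^3 + y^2 = y^2 * (y + 1)" by (simp add: algebra_simps power2_eq_square power3_eq_cube)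
  have p: "2 - (y^3 - y^2 + 2) = - (y^2 * (y - 1))" by (simp add: algebra_simps power2_eq_square power3_eq_cube)
  show ?thesis unfolding e3 f canc5[OF y(4)] canc4[OF y(1) y(2) y(4)] p by simp
qed

lemma alg_2t:
  fixes y :: real assumes "y > 1"
  shows "1 / (y^3 + y + 2) + (1/2) * (y^3 - y^2 + 2) / (y^3 + y + 2) + (y/2) * (y^2 + y + 2) / (y^3 + y + 2) = 1"
proof -
  have y: "y^3 + y + 2 > 0" using assms by (smt (verit) one_less_power zero_less_power)
  have p: "2 + (y^3 - y^2 + 2) + y * (y^2 + y + 2) = 2 * (y^3 + y + 2)"
    by (simp add: algebra_simps power2_eq_square power3_eq_cube)
  show ?thesis unfolding canc6[OF y] p using y by simp
qed

lemma canc1: fixes a b c q N :: real assumes "a > 0" "b > 0" "c > 0" "q > 0"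
  shows "a / q * (N / (a * b)) / (c / b) = N / (q * c)"
  using assms by (simp add: field_simps)

lemma canc2: fixes a b c D N :: real assumes "a > 0" "b > 0" "c > 0" "D > 0"
  shows "1 / 2 * (a * c / D) * (N / (a * b)) / (c / b) = N / (2 * D)"
  using assms by (simp add: field_simps)

lemma canc3: fixes a c q :: real assumes "c > 0" "q > 0"
  shows "a / q + 2 / (q * c) = (a * c + 2) / (q * c)"
  using assms by (simp add: field_simps)

lemma alg_e:
  fixes q x :: real assumes "q \<ge> 3" "x > 1"
  shows "(q - 3) / (2 * q) + 2 / (q * (x + 1)) + (q - 1) / (2 * q) =
    (1 - 2 / q) * (1 + 2 * (q - 1) / ((q - 2) * (x - 1))) / (1 + 2 / (x - 1))"
proof -
  have q: "q > 0" "q - 2 > 0" and x: "x - 1 > 0" "x + 1 > 0" using assms by auto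
  have e1: "1 - 2 / q = (q - 2) / q" using q by (simp add: field_simps)
  have e2: "1 + 2 * (q - 1) / ((q - 2) * (x - 1)) = ((q - 2) * (x - 1) + 2 * (q - 1)) / ((q - 2) * (x - 1))"
    using q x by (simp add: add_divide_distrib)
  have e3: "1 + 2 / (x - 1) = (x + 1) / (x - 1)" using x by (simp add: field_simps)
  define N where "N = (q - 2) * (x - 1) + 2 * (q - 1)"
  have r: "(q - 2) / q * (N / ((q - 2) * (x - 1))) / ((x + 1) / (x - 1)) = N / (q * (x + 1))"
    using q x by (intro canc1) auto
  have l1: "(q - 3) / (2 * q) + (q - 1) / (2 * q) = (q - 2) / q"
    using q by (simp add: field_simps)
  have l2: "(q - 2) / q + 2 / (q * (x + 1)) = ((q - 2) * (x + 1) + 2) / (q * (x + 1))"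
    using q x by (intro canc3) auto
  have "(q - 2) * (x + 1) + 2 = N" unfolding N_def by (simp add: algebra_simps)
  then show ?thesis unfolding e1 e2 e3 N_def[symmetric] r using l1 l2 by simp
qed

lemma alg_2e:
  fixes y :: real assumes "y > 1"
  shows "1 / (y^3 + y + 2) + (1/2) * (y^3 - y^2 + 2) / (y^3 + y + 2) =
    (1 / 2) * ((y^3 + y^2) / (y^3 + y + 2)) * (1 + 2 * 2 / (y^2 * (y - 1))) / (1 + 2 / (y - 1))"
proof -
  have y: "y - 1 > 0" "y + 1 > 0" "y^2 > 0" "y^3 + y + 2 > 0" using assms
    by auto (smt (verit) one_less_power zero_less_power)
  have e2: "1 + 2 * 2 / (y^2 * (y - 1)) = (y^2 * (y - 1) + 4) / (y^2 * (y - 1))"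
    using y by (simp add: add_divide_distrib)
  have e3: "1 + 2 / (y - 1) = (y + 1) / (y - 1)" using y by (simp add: field_simps)
  have f: "y^3 + y^2 = y^2 * (y + 1)" by (simp add: algebra_simps power2_eq_square power3_eq_cube)
  define D where "D = y^3 + y + 2"
  define N where "N = y^2 * (y - 1) + 4"
  have r: "1 / 2 * (y\<^sup>2 * (y + 1) / D) * (N / (y\<^sup>2 * (y - 1))) / ((y + 1) / (y - 1)) = N / (2 * D)"
    using y unfolding D_def[symmetric] by (intro canc2) auto
  have l: "1 / D + (1/2) * (y^3 - y^2 + 2) / D = (2 + (y^3 - y^2 + 2)) / (2 * D)"
    using y unfolding D_def[symmetric] by (simp add: field_simps)
  have "2 + (y^3 - y^2 + 2) = N" unfolding N_def by (simp add: algebra_simps power2_eq_square power3_eq_cube)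
  then show ?thesis unfolding e2 e3 f D_def[symmetric] N_def[symmetric] r l by simp
qed

lemma (in prob_space) prod_formula:
  assumes indep: "indep_vars (\<lambda>_. borel) X {p. prime p}"
    and tot: "\<And>p. prime p \<Longrightarrow> prob {\<omega>\<in>space M. X p \<omega> = 1} + prob {\<omega>\<in>space M. X p \<omega> = -1}
                 + prob {\<omega>\<in>space M. X p \<omega> = 0} = 1"
  shows "integral\<^sup>L M (Xmult X m) = (\<Prod>p\<in>prime_factors m. prob {\<omega>\<in>space M. X p \<omega> = 1}
            + (-1) ^ multiplicity p m * prob {\<omega>\<in>space M. X p \<omega> = -1})"
proof -
  have meas: "X p \<in> borel_measurable M" if "prime p" for p
    using indep that unfolding indep_vars_def by auto
  have mpos: "multiplicity p m > 0" if "p \<in> prime_factors m" for p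
    using that by (auto simp: prime_factors_multiplicity)
  have sv: "integrable M (\<lambda>\<omega>. X p \<omega> ^ multiplicity p m) \<and>
      integral\<^sup>L M (\<lambda>\<omega>. X p \<omega> ^ multiplicity p m) = prob {\<omega>\<in>space M. X p \<omega> = 1}
            + (-1) ^ multiplicity p m * prob {\<omega>\<in>space M. X p \<omega> = -1}"
    if "p \<in> prime_factors m" for p
    using that by (intro single_var meas tot mpos) auto
  have ind2: "indep_vars (\<lambda>_. borel) (\<lambda>p \<omega>. X p \<omega> ^ multiplicity p m) (prime_factors m)"
    by (rule indep_vars_compose2[OF indep_vars_subset[OF indep]]) auto
  have "integral\<^sup>L M (Xmult X m) = integral\<^sup>L M (\<lambda>\<omega>. \<Prod>p\<in>prime_factors m. X p \<omega> ^ multiplicity p m)"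
    by (simp add: Xmult_def[abs_def])
  also have "\<dots> = (\<Prod>p\<in>prime_factors m. integral\<^sup>L M (\<lambda>\<omega>. X p \<omega> ^ multiplicity p m))"
    by (rule indep_vars_lebesgue_integral[OF _ ind2]) (use sv in auto)
  also have "\<dots> = (\<Prod>p\<in>prime_factors m. prob {\<omega>\<in>space M. X p \<omega> = 1}
            + (-1) ^ multiplicity p m * prob {\<omega>\<in>space M. X p \<omega> = -1})"
    by (intro prod.cong refl) (use sv in auto)
  finally show ?thesis .
qed

lemma prod_split:
  fixes k :: "nat \<Rightarrow> real" and f :: "nat \<Rightarrow> real"
  assumes "m > 0"
  shows "(\<Prod>p\<in>prime_factors m. (if p = 2 then k (multiplicity p m)
            else if odd (multiplicity p m) then - 1 / real p else f p))
       = (if odd m then 1 else k (multiplicity 2 m)) * ((-1) ^ omega (m0 m) / real (m0 m))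
          * (\<Prod>p\<in>even_odd_primes m. f p)"
proof -
  define G where "G p = (if p = 2 then k (multiplicity p m)
            else if odd (multiplicity p m) then - 1 / real p else f p)" for p
  define T where "T = prime_factors m \<inter> {2}"
  define Oset where "Oset = {p\<in>prime_factors m. p \<noteq> 2 \<and> odd (multiplicity p m)}"
  define E where "E = even_odd_primes m"
  have split: "prime_factors m = T \<union> (Oset \<union> E)"
    by (auto simp: T_def Oset_def E_def even_odd_primes_def)
  have d1: "T \<inter> (Oset \<union> E) = {}" and d2: "Oset \<inter> E = {}"
    by (auto simp: T_def Oset_def E_def even_odd_primes_def)
  have fin: "finite T" "finite Oset" "finite E"
    by (auto simp: T_def Oset_def E_def even_odd_primes_def)
  have "(\<Prod>p\<in>prime_factors m. G p) = prod G T * (prod G Oset * prod G E)"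
    unfolding split using fin d1 d2 by (simp add: prod.union_disjoint)
  moreover have "prod G T = (if odd m then 1 else k (multiplicity 2 m))"
  proof (cases "odd m")
    case True
    then have "T = {}" unfolding T_def by (auto simp: in_prime_factors_iff)
    then show ?thesis using True by simp
  next
    case False
    then have "T = {2}" unfolding T_def using assms by (auto simp: in_prime_factors_iff)
    then show ?thesis using False by (simp add: G_def)
  qed
  moreover have "prod G Oset = (\<Prod>p\<in>Oset. - 1 / real p)"
    by (intro prod.cong refl) (auto simp: G_def Oset_def)
  moreover have "prod G E = prod f E"
    by (intro prod.cong refl) (auto simp: G_def E_def even_odd_primes_def)
  ultimately show ?thesis
    unfolding G_def[symmetric] E_def[symmetric] using sign_part[OF assms] unfolding Oset_def
    by (simp add: mult_ac)
qed

lemma powr_gt_one: "1 < (x::real) \<Longrightarrow> 0 < s \<Longrightarrow> 1 < x powr s"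
  using powr_less_mono[of 0 s x] by simp

lemma pow248: "(4::real) powr s = (2 powr s)^2" "(8::real) powr s = (2 powr s)^3"
proof -
  have "(4::real) powr s = (2*2) powr s" by simp
  also have "\<dots> = (2 powr s)^2" by (subst powr_mult) (auto simp: power2_eq_square)
  finally show "(4::real) powr s = (2 powr s)^2" .
  have "(8::real) powr s = (2*(2*2)) powr s" by simp
  also have "\<dots> = (2 powr s)^3" by (simp only: powr_mult power3_eq_cube)
  finally show "(8::real) powr s = (2 powr s)^3" .
qed

definition k2 :: "real \<Rightarrow> nat \<Rightarrow> real" where
  "k2 s e = ((-1) ^ e / 2) * ((8 powr s + 4 powr s) / (8 powr s + 2 powr s + 2)) *
     (1 + 2 * (1 + (-1) ^ e) / (4 powr s * (2 powr s - 1)))"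

lemma factor_two:
  fixes s :: real
  assumes "s > 0"
  shows "pXs_one s 2 + (-1)^e * pXs_mone s 2 = k2 s e / (1 + 2 / (2 powr s - 1))"
proof -
  define y where "y = (2::real) powr s"
  have y: "y > 1" unfolding y_def using assms by (intro powr_gt_one) auto
  have A: "pXs_one s 2 = 1 / (y^3 + y + 2)" unfolding pXs_one_def pow248 y_def by simp
  have B: "pXs_mone s 2 = (1/2) * (y^3 - y^2 + 2) / (y^3 + y + 2)" unfolding pXs_mone_def pow248 y_def by simp
  have C: "1 + 2 / (2 powr s - 1) = 1 + 2 / (y - 1)" unfolding y_def by simp
  show ?thesis
  proof (cases "even e")
    case True
    have K: "k2 s e = (1 / 2) * ((y^3 + y^2) / (y^3 + y + 2)) * (1 + 2 * 2 / (y^2 * (y - 1)))"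
      unfolding k2_def pow248 y_def using True by simp
    have "pXs_one s 2 + (-1)^e * pXs_mone s 2 = pXs_one s 2 + pXs_mone s 2" using True by simp
    also have "\<dots> = k2 s e / (1 + 2 / (2 powr s - 1))" unfolding A B K C by (rule alg_2e[OF y])
    finally show ?thesis .
  next
    case False
    have K: "k2 s e = (- 1 / 2) * ((y^3 + y^2) / (y^3 + y + 2))"
      unfolding k2_def pow248 y_def using False by simp
    have "pXs_one s 2 + (-1)^e * pXs_mone s 2 = pXs_one s 2 - pXs_mone s 2" using False by simp
    also have "\<dots> = k2 s e / (1 + 2 / (2 powr s - 1))" unfolding A B K C by (rule alg_2o[OF y])
    finally show ?thesis .
  qed
qed

lemma alg_tot:
  fixes q x :: real assumes "q > 0" "x > 0"
  shows "(q - 3) / (2 * q) + 2 / (q * (x + 1)) + (q - 1) / (2 * q) + (1 - (1 / q) * (q - 2 + 2 / (x + 1))) = 1"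
  using assms by (simp add: field_split_simps) (smt (z3) mult_pos_pos)

lemma tot_s:
  fixes s :: real
  assumes "s > 0" "prime p"
  shows "pXs_one s p + pXs_mone s p + pXs_zero s p = 1"
proof (cases "p = 2")
  case True
  define y where "y = (2::real) powr s"
  have y: "y > 1" unfolding y_def using assms by (intro powr_gt_one) auto
  have h: "2 powr (s - 1) = y / 2" unfolding y_def by (simp add: powr_diff)
  show ?thesis using True alg_2t[OF y] unfolding pXs_one_def pXs_mone_def pXs_zero_def pow248 h y_def[symmetric]
    by simp
next
  case False
  have q: "real p > 0" using assms prime_gt_0_nat by auto
  have x: "real p powr s > 0" using q by simp
  show ?thesis using False alg_tot[OF q x] unfolding pXs_one_def pXs_mone_def pXs_zero_def
    by simp
qed

lemma tot_i:
  assumes "prime p"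
  shows "pXi_one p + pXi_mone p + pXi_zero p = 1"
  using assms prime_gt_0_nat[of p] unfolding pXi_one_def pXi_mone_def pXi_zero_def
  by (auto simp: field_simps)

lemma odd_prime_ge3: "prime (p::nat) \<Longrightarrow> p \<noteq> 2 \<Longrightarrow> p \<ge> 3"
  using prime_ge_2_nat[of p] by (cases "p = 2") auto

definition fs :: "real \<Rightarrow> nat \<Rightarrow> real" where
  "fs s p = (1 - 2 / real p) * (1 + 2 * (real p - 1) / ((real p - 2) * (real p powr s - 1)))"

definition Ds :: "real \<Rightarrow> nat \<Rightarrow> real" where
  "Ds s p = 1 + 2 / (real p powr s - 1)"

lemma factor_s:
  fixes s :: real
  assumes "s > 0" "prime p" "e > 0"
  shows "pXs_one s p + (-1)^e * pXs_mone s p =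
    (if p = 2 then k2 s e else if odd e then - 1 / real p else fs s p) / Ds s p"
proof (cases "p = 2")
  case True
  then show ?thesis using factor_two[OF assms(1)] by (simp add: Ds_def)
next
  case False
  have q: "real p \<ge> 3" using odd_prime_ge3[OF assms(2) False] by simp
  have x: "real p powr s > 1" using q assms by (intro powr_gt_one) auto
  have A: "pXs_one s p = (real p - 3) / (2 * real p) + 2 / (real p * (real p powr s + 1))"
    unfolding pXs_one_def using False by simp
  have B: "pXs_mone s p = (real p - 1) / (2 * real p)"
    unfolding pXs_mone_def using False by simp
  show ?thesis
  proof (cases "even e")
    case True
    have "pXs_one s p + (-1)^e * pXs_mone s p = pXs_one s p + pXs_mone s p" using True by simp
    also have "\<dots> = fs s p / Ds s p" unfolding A B fs_def Ds_def by (rule alg_e[OF q x])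
    finally show ?thesis using True False by simp
  next
    case odd: False
    have "pXs_one s p + (-1)^e * pXs_mone s p = pXs_one s p - pXs_mone s p" using odd by simp
    also have "\<dots> = - 1 / real p / Ds s p" unfolding A B Ds_def by (rule alg_o[OF q x])
    finally show ?thesis using odd False by simp
  qed
qed

lemma factor_i:
  assumes "prime p"
  shows "pXi_one p + (-1)^e * pXi_mone p =
    (if p = 2 then (-1)^e / 2 else if odd e then - 1 / real p else 1 - 2 / real p)"
proof (cases "p = 2")
  case True then show ?thesis by (simp add: pXi_one_def pXi_mone_def)
next
  case False
  have q: "real p \<ge> 3" using odd_prime_ge3[OF assms False] by simp
  show ?thesis using False q unfolding pXi_one_def pXi_mone_def
    by (cases "even e") (auto simp: field_simps)
qed

theorem lemma16:
  fixes m :: nat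
  assumes "m > 0"
  shows "(\<forall>s::real. s > 1/2 \<longrightarrow> (\<forall>(M::'a measure) X. Xs_model M s X \<longrightarrow>
            integral\<^sup>L M (Xmult X m) = h_fun m s))
       \<and> (\<forall>(N::'b measure) Y. Xinf_model N Y \<longrightarrow>
            integral\<^sup>L N (Xmult Y m) =
              ((-1) ^ omega (m0 m) / real (m0 m)) *
              (\<Prod>p\<in>even_odd_primes m. 1 - 2 / real p) * (a_fun m / 4))"
proof (intro conjI allI impI)
  fix s :: real and M :: "'a measure" and X
  assume s: "s > 1/2" and mod: "Xs_model M s X"
  then have s0: "s > 0" by simp
  interpret prob_space M using mod unfolding Xs_model_def by auto
  have indep: "indep_vars (\<lambda>_. borel) X {p. prime p}" using mod unfolding Xs_model_def by auto
  have pr: "\<And>p. prime p \<Longrightarrow> prob {\<omega> \<in> space M. X p \<omega> = 1} = pXs_one s p \<and>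
        prob {\<omega> \<in> space M. X p \<omega> = -1} = pXs_mone s p \<and>
        prob {\<omega> \<in> space M. X p \<omega> = 0} = pXs_zero s p"
    using mod unfolding Xs_model_def by auto
  have "integral\<^sup>L M (Xmult X m) = (\<Prod>p\<in>prime_factors m. prob {\<omega>\<in>space M. X p \<omega> = 1}
            + (-1) ^ multiplicity p m * prob {\<omega>\<in>space M. X p \<omega> = -1})"
    by (rule prod_formula[OF indep]) (use pr tot_s[OF s0] in auto)
  also have "\<dots> = (\<Prod>p\<in>prime_factors m. (if p = 2 then k2 s (multiplicity p m)
            else if odd (multiplicity p m) then - 1 / real p else fs s p) / Ds s p)"
    by (intro prod.cong refl, subst factor_s[OF s0, symmetric])
       (use pr in \<open>auto simp: prime_factors_multiplicity\<close>)
  also have "\<dots> = (\<Prod>p\<in>prime_factors m. (if p = 2 then k2 s (multiplicity p m)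
            else if odd (multiplicity p m) then - 1 / real p else fs s p)) / (\<Prod>p\<in>prime_factors m. Ds s p)"
    by (rule prod_dividef)
  also have "\<dots> = (if odd m then 1 else k2 s (multiplicity 2 m)) * ((-1) ^ omega (m0 m) / real (m0 m))
          * (\<Prod>p\<in>even_odd_primes m. fs s p) / (\<Prod>p\<in>prime_factors m. Ds s p)"
    by (subst prod_split[OF assms]) simp
  also have "\<dots> = h_fun m s"
    unfolding h_fun_def kappa_t_def k2_def fs_def Ds_def by simp
  finally show "integral\<^sup>L M (Xmult X m) = h_fun m s" .
next
  fix N :: "'b measure" and Y
  assume mod: "Xinf_model N Y"
  interpret prob_space N using mod unfolding Xinf_model_def by auto
  have indep: "indep_vars (\<lambda>_. borel) Y {p. prime p}" using mod unfolding Xinf_model_def by auto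
  have pr: "\<And>p. prime p \<Longrightarrow> prob {\<omega> \<in> space N. Y p \<omega> = 1} = pXi_one p \<and>
        prob {\<omega> \<in> space N. Y p \<omega> = -1} = pXi_mone p \<and>
        prob {\<omega> \<in> space N. Y p \<omega> = 0} = pXi_zero p"
    using mod unfolding Xinf_model_def by auto
  have "integral\<^sup>L N (Xmult Y m) = (\<Prod>p\<in>prime_factors m. prob {\<omega>\<in>space N. Y p \<omega> = 1}
            + (-1) ^ multiplicity p m * prob {\<omega>\<in>space N. Y p \<omega> = -1})"
    by (rule prod_formula[OF indep]) (use pr tot_i in auto)
  also have "\<dots> = (\<Prod>p\<in>prime_factors m. (if p = 2 then (\<lambda>e. (-1)^e / 2) (multiplicity p m)
            else if odd (multiplicity p m) then - 1 / real p else 1 - 2 / real p))"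
    by (intro prod.cong refl, subst factor_i[symmetric]) (use pr in \<open>auto dest: in_prime_factors_imp_prime\<close>)
  also have "\<dots> = (if odd m then 1 else (-1) ^ multiplicity 2 m / 2) * ((-1) ^ omega (m0 m) / real (m0 m))
          * (\<Prod>p\<in>even_odd_primes m. 1 - 2 / real p)"
    by (subst prod_split[OF assms]) simp
  also have "\<dots> = ((-1) ^ omega (m0 m) / real (m0 m)) *
              (\<Prod>p\<in>even_odd_primes m. 1 - 2 / real p) * (a_fun m / 4)"
    unfolding a_fun_def by simp
  finally show "integral\<^sup>L N (Xmult Y m) = ((-1) ^ omega (m0 m) / real (m0 m)) *
              (\<Prod>p\<in>even_odd_primes m. 1 - 2 / real p) * (a_fun m / 4)" .
qed

end
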